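(* Let $p\in[1,\infty)$ and $\rho\in\mathfrak M_+(\mathsf X\times\mathsf X)$. Let $E_0\subseteq\mathsf X$ be $\mathfrak m$-measurable, $(\mathsf Y,\mathsf d_{\mathsf Y})$ a metric space, $f\in\mathfrak M(E_0,\mathsf Y)$, and $E\Subset E_0$ $\mathfrak m$-measurable. Suppose there is $R>0$ with $\mathrm B(E,R)\subseteq E_0$ and a function $G:E_0\times(0,R]\to[0,+\infty]$ such that: (i) for every $r\in(0,R]$, $G(\cdot,r)$ is $\mathfrak m$-measurable; (ii) there is $C>0$ such that for every $r\in(0,R]$, for $\mathfrak m$-a.e. $x\in E_0$, $\sup_{r'\in[r/2,r]}G(x,r')\le C\,G(x,r)$; (iii) there is $D\subseteq E_0\times E_0$ with $(\mathfrak m\otimes\mathfrak m)((E_0\times E_0)\setminus D)=0$ such that for all $(x,x')\in D$ with $x\in E$ and $x'\in\mathrm B(x,R)\setminus\{x\}$, $(\mathsf Q_f(x,x'))^p\le G(x,\mathsf d(x,x'))+G(x',\mathsf d(x,x'))$. Then for every $r\in(0,R]$, \[ \int_E\int_{\mathrm B(x,r)}(\mathsf Q_f(x,x'))^p\rho(x,x')\,\mathrm d\mathfrak m(x')\,\mathrm d\mathfrak m(x)\le C\,\mathcal I^U_{E,r}[\rho]\sup_{r'\in(0,r]}\int_{E_0}G(x,r')\,\mathrm d\mathfrak m(x). \]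
   Context: $(\mathsf X,\mathsf d)$ is a locally complete separable metric space of positive diameter with a locally finite Borel outer measure $\mathfrak m$, $\mathfrak m(\mathsf X)>0$. Conventions $0\cdot(+\infty)=0/0=0$. Closed balls $\mathrm B(x,r)=\{x':\mathsf d(x,x')\le r\}$, $\mathrm B(S,r)=\{x':\operatorname{dist}(S,\{x'\})\le r\}$; $\mathrm A(x,\tau)=\{x':\mathsf d(x,x')\in\tau\}$. $S\Subset S_0$ means $S\subseteq S_0$ and $\operatorname{dist}(S,\mathsf X\setminus S_0)>0$. $\mathfrak M(E,\mathsf Y)$: $\mathfrak m$-measurable maps $E\to\mathsf Y$ separably valued off an $\mathfrak m$-null set. $\mathfrak M_+(\mathsf X\times\mathsf X)$: $(\mathfrak m\otimes\mathfrak m)$-measurable functions into $[0,+\infty]$. $\mathsf Q_f(x,x')=\mathsf d_{\mathsf Y}(f(x),f(x'))/\mathsf d(x,x')$ for $x\ne x'$, $0$ for $x=x'$. For $r>0$, $\mathcal P^U_r$ is the set of sequences $(\tau_k)_{k\in\mathbb N_0}$ of nonempty intervals in $(0,r]$ with $\sup\tau_k\le2\inf\tau_k$ and $(0,r]\subseteq\bigcup_k\tau_k$; for $S\subseteq\mathsf X$, $\mathcal I^U_{S,r}[\rho,\tau_\bullet]=\sum_k\operatorname{ess\,sup}_{x\in\mathrm B(S,\sup\tau_k)}\int_{\mathrm A(x,\tau_k)}(\rho(x,x')+\rho(x',x))\,\mathrm d\mathfrak m(x')$ (ess sup w.r.t. $\mathfrak m$) and $\mathcal I^U_{S,r}[\rho]=\inf_{\tau_\bullet\in\mathcal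 P^U_r}\mathcal I^U_{S,r}[\rho,\tau_\bullet]$. *)

theory Defs
  imports "HOL-Analysis.Analysis"
begin

text \<open>Closed metric neighbourhood B(S,r) = {x'. dist(S,{x'}) \<le> r}; empty when S is empty
  (dist from the empty set is +infinity).\<close>
definition closed_nbhd :: "'a::metric_space set \<Rightarrow> real \<Rightarrow> 'a set" where
  "closed_nbhd S r = {x. S \<noteq> {} \<and> infdist x S \<le> r}"

definition annulus :: "'a::metric_space \<Rightarrow> real set \<Rightarrow> 'a set" where
  "annulus x \<tau> = {x'. dist x x' \<in> \<tau>}"

definition well_inside :: "'a::metric_space set \<Rightarrow> 'a set \<Rightarrow> bool" where
  "well_inside S S0 \<longleftrightarrow> S \<subseteq> S0 \<and> (\<exists>\<delta>>0. \<forall>x\<in>S. \<forall>y. y \<notin> S0 \<longrightarrow> \<delta> \<le> dist x y)"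

definition meas_maps :: "'a measure \<Rightarrow> 'a set \<Rightarrow> ('a \<Rightarrow> 'b::metric_space) set" where
  "meas_maps M E = {f. (\<forall>U. open U \<longrightarrow> {x\<in>E. f x \<in> U} \<in> sets M) \<and>
      (\<exists>N\<in>null_sets M. \<exists>C. countable C \<and> f ` (E - N) \<subseteq> closure C)}"

definition diffquot :: "('a::metric_space \<Rightarrow> 'b::metric_space) \<Rightarrow> 'a \<Rightarrow> 'a \<Rightarrow> real" where
  "diffquot f x x' = (if x = x' then 0 else dist (f x) (f x') / dist x x')"

definition ess_sup_on :: "'a measure \<Rightarrow> 'a set \<Rightarrow> ('a \<Rightarrow> ennreal) \<Rightarrow> ennreal" where
  "ess_sup_on M S g = Inf {c. \<exists>N\<in>null_sets M. \<forall>x\<in>S - N. g x \<le> c}"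

definition adm_intervals :: "real \<Rightarrow> (nat \<Rightarrow> real set) set" where
  "adm_intervals r = {\<tau>. (\<forall>k. \<tau> k \<noteq> {} \<and> is_interval (\<tau> k) \<and> \<tau> k \<subseteq> {0<..r}
        \<and> Sup (\<tau> k) \<le> 2 * Inf (\<tau> k)) \<and> {0<..r} \<subseteq> (\<Union>k. \<tau> k)}"

definition IU_seq :: "'a::metric_space measure \<Rightarrow> 'a set \<Rightarrow> ('a \<times> 'a \<Rightarrow> ennreal) \<Rightarrow> (nat \<Rightarrow> real set) \<Rightarrow> ennreal" where
  "IU_seq M S \<rho> \<tau> = (\<Sum>k. ess_sup_on M (closed_nbhd S (Sup (\<tau> k)))
      (\<lambda>x. \<integral>\<^sup>+ x' \<in> annulus x (\<tau> k). (\<rho> (x, x') + \<rho> (x', x)) \<partial>M))"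

definition IU :: "'a::metric_space measure \<Rightarrow> 'a set \<Rightarrow> real \<Rightarrow> ('a \<times> 'a \<Rightarrow> ennreal) \<Rightarrow> ennreal" where
  "IU M S r \<rho> = (INF \<tau>\<in>adm_intervals r. IU_seq M S \<rho> \<tau>)"

end

theory Submission
  imports Defs
begin

lemma meas_from_borel:
  assumes "f \<in> measurable borel N" "sets borel \<subseteq> sets M" "space M = UNIV"
  shows "f \<in> measurable M N"
  using assms unfolding measurable_def by auto

lemma cont_meas:
  fixes f :: "'a::metric_space \<Rightarrow> 'c::topological_space"
  assumes "continuous_on UNIV f" "sets borel \<subseteq> sets M" "space M = UNIV"
  shows "f \<in> borel_measurable M"
  using meas_from_borel[OF borel_measurable_continuous_onI[OF assms(1)] assms(2,3)] .

lemma sigma_finite_M: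
  fixes M :: "'a::metric_space measure"
  assumes space: "space M = UNIV"
    and borel_sets: "sets borel \<subseteq> sets M"
    and loc_finite: "\<forall>x. \<exists>s>0. emeasure M (ball x s) < \<infinity>"
    and separable: "\<exists>S::'a set. countable S \<and> closure S = UNIV"
  shows "sigma_finite_measure M"
proof -
  obtain S :: "'a set" where S: "countable S" "closure S = UNIV" using separable by blast
  define A where "A = {ball s (1 / Suc n) | s n. s \<in> S \<and> emeasure M (ball s (1 / Suc n)) < \<infinity>}"
  have cA: "countable A"
  proof -
    have "A \<subseteq> (\<lambda>(s,n). ball s (1 / Suc n)) ` (S \<times> UNIV)" unfolding A_def by auto
    moreover have "countable ((\<lambda>(s,n). ball s (1 / Suc n)) ` (S \<times> (UNIV::nat set)))"
      using S(1) by auto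
    ultimately show ?thesis using countable_subset by blast
  qed
  have sA: "A \<subseteq> sets M" unfolding A_def using borel_sets by auto
  have fA: "\<forall>a\<in>A. emeasure M a \<noteq> \<infinity>" unfolding A_def by auto
  have uA: "\<Union>A = space M"
  proof -
    { fix x :: 'a
      obtain e where e: "e > 0" "emeasure M (ball x e) < \<infinity>" using loc_finite by blast
      obtain n :: nat where n: "1 / Suc n < e / 2"
        using e(1) by (metis half_gt_zero_iff nat_approx_posE)
      have "x \<in> closure S" using S by simp
      then obtain s where s: "s \<in> S" "dist s x < 1 / Suc n"
        by (metis closure_approachable of_nat_0_less_iff zero_less_Suc zero_less_divide_1_iff)
      have sub: "ball s (1 / Suc n) \<subseteq> ball x e"
      proof
        fix y assume "y \<in> ball s (1 / Suc n)"
        then have "dist s y < 1 / Suc n" by simp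
        then have "dist x y < e" using s n dist_triangle[of x y s] by (simp add: dist_commute)
        then show "y \<in> ball x e" by simp
      qed
      have "emeasure M (ball s (1 / Suc n)) \<le> emeasure M (ball x e)"
        by (rule emeasure_mono[OF sub]) (use borel_sets in auto)
      then have "emeasure M (ball s (1 / Suc n)) < \<infinity>" using e by auto
      then have "ball s (1 / Suc n) \<in> A" unfolding A_def using s by blast
      moreover have "x \<in> ball s (1 / Suc n)" using s by (simp add: dist_commute)
      ultimately have "x \<in> \<Union>A" by blast }
    then show ?thesis using space by auto
  qed
  show ?thesis
    by (rule sigma_finite_measure.intro) (use cA sA uA fA in blast)
qed

lemma dist_pair_meas:
  fixes M :: "'a::metric_space measure"
  assumes space: "space M = UNIV" and borel_sets: "sets borel \<subseteq> sets M"
    and separable: "\<exists>S::'a set. countable S \<and> closure S = UNIV"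
  shows "(\<lambda>z. dist (fst z) (snd z)) \<in> borel_measurable (M \<Otimes>\<^sub>M M)"
proof -
  obtain S :: "'a set" where S: "countable S" "closure S = UNIV" using separable by blast
  have eq: "ennreal (dist a b) = (INF s\<in>S. ennreal (dist a s + dist s b))" for a b
  proof (rule antisym)
    show "ennreal (dist a b) \<le> (INF s\<in>S. ennreal (dist a s + dist s b))"
      by (rule INF_greatest, rule ennreal_leI, rule dist_triangle)
    show "(INF s\<in>S. ennreal (dist a s + dist s b)) \<le> ennreal (dist a b)"
    proof (rule ennreal_le_epsilon)
      fix e :: real assume e: "0 < e"
      have "a \<in> closure S" using S by simp
      then obtain s where s: "s \<in> S" "dist s a < e/2"
        using e by (metis closure_approachable half_gt_zero_iff)
      have "(INF s\<in>S. ennreal (dist a s + dist s b)) \<le> ennreal (dist a s + dist s b)"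
        by (rule INF_lower) fact
      also have "\<dots> \<le> ennreal (dist a b + e)"
        using s dist_triangle[of s b a] by (intro ennreal_leI) (simp add: dist_commute)
      also have "\<dots> = ennreal (dist a b) + ennreal e"
        using e by (simp add: ennreal_plus)
      finally show "(INF s\<in>S. ennreal (dist a s + dist s b)) \<le> ennreal (dist a b) + ennreal e" .
    qed
  qed
  have m1: "(\<lambda>x. dist x s) \<in> borel_measurable M" for s :: 'a
    by (rule cont_meas[OF _ borel_sets space]) (intro continuous_intros)
  have m2: "(\<lambda>x. dist s x) \<in> borel_measurable M" for s :: 'a
    by (rule cont_meas[OF _ borel_sets space]) (intro continuous_intros)
  have "(\<lambda>z. INF s\<in>S. ennreal (dist (fst z) s + dist s (snd z))) \<in> borel_measurable (M \<Otimes>\<^sub>M M)"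
  proof (rule borel_measurable_INF[OF S(1)])
    fix s assume "s \<in> S"
    have "(\<lambda>z. dist (fst z) s) \<in> borel_measurable (M \<Otimes>\<^sub>M M)"
      using measurable_comp[OF measurable_fst m1[of s]] by (simp add: o_def)
    moreover have "(\<lambda>z. dist s (snd z)) \<in> borel_measurable (M \<Otimes>\<^sub>M M)"
      using measurable_comp[OF measurable_snd m2[of s]] by (simp add: o_def)
    ultimately show "(\<lambda>z. ennreal (dist (fst z) s + dist s (snd z))) \<in> borel_measurable (M \<Otimes>\<^sub>M M)"
      by measurable
  qed
  moreover have "(\<lambda>z. ennreal (dist (fst z) (snd z))) = (\<lambda>z. INF s\<in>S. ennreal (dist (fst z) s + dist s (snd z)))"
    by (rule ext) (rule eq)
  ultimately have "(\<lambda>z. ennreal (dist (fst z) (snd z))) \<in> borel_measurable (M \<Otimes>\<^sub>M M)"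
    by simp
  then have "(\<lambda>z. enn2real (ennreal (dist (fst z) (snd z)))) \<in> borel_measurable (M \<Otimes>\<^sub>M M)"
    by measurable
  then show ?thesis by simp
qed

lemma ess_sup_AE:
  "AE x in M. x \<in> S \<longrightarrow> g x \<le> ess_sup_on M S g"
proof -
  define A where "A = {c. \<exists>N\<in>null_sets M. \<forall>x\<in>S - N. g x \<le> c}"
  have "top \<in> A" unfolding A_def by (auto intro!: bexI[of _ "{}"])
  then have "A \<noteq> {}" by blast
  from Inf_as_limit[OF this] obtain u where u: "\<And>n. u n \<in> A" "u \<longlonglongrightarrow> Inf A" by blast
  have "\<forall>n. \<exists>N\<in>null_sets M. \<forall>x\<in>S - N. g x \<le> u n" using u(1) unfolding A_def by blast
  then obtain N where N: "\<And>n. N n \<in> null_sets M" "\<And>n x. x \<in> S - N n \<Longrightarrow> g x \<le> u n"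
    by metis
  have "(\<Union>n. N n) \<in> null_sets M" using N(1) by auto
  then show ?thesis
  proof (rule AE_I')
    show "{x \<in> space M. \<not> (x \<in> S \<longrightarrow> g x \<le> ess_sup_on M S g)} \<subseteq> (\<Union>n. N n)"
    proof
      fix x assume "x \<in> {x \<in> space M. \<not> (x \<in> S \<longrightarrow> g x \<le> ess_sup_on M S g)}"
      then have x: "x \<in> S" "\<not> g x \<le> ess_sup_on M S g" by auto
      show "x \<in> (\<Union>n. N n)"
      proof (rule ccontr)
        assume "x \<notin> (\<Union>n. N n)"
        then have "\<forall>n. g x \<le> u n" using N(2) x(1) by blast
        then have "g x \<le> Inf A" by (intro LIMSEQ_le_const[OF u(2)]) auto
        then show False using x(2) unfolding ess_sup_on_def A_def by simp
      qed
    qed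
  qed
qed

lemma adm_props:
  assumes "\<tau> \<in> adm_intervals r"
  shows "\<tau> k \<noteq> {}" "is_interval (\<tau> k)" "\<tau> k \<subseteq> {0<..r}" "Sup (\<tau> k) \<le> 2 * Inf (\<tau> k)"
    "{0<..r} \<subseteq> (\<Union>k. \<tau> k)"
  using assms unfolding adm_intervals_def by auto

lemma adm_Sup:
  assumes "\<tau> \<in> adm_intervals r"
  shows "0 < Sup (\<tau> k)" "Sup (\<tau> k) \<le> r"
    "t \<in> \<tau> k \<Longrightarrow> t \<le> Sup (\<tau> k)" "t \<in> \<tau> k \<Longrightarrow> Sup (\<tau> k) / 2 \<le> t"
    "\<tau> k \<in> sets borel"
proof -
  note P = adm_props(1-4)[OF assms, of k]
  have ba: "bdd_above (\<tau> k)" using P(3) by (auto intro!: bdd_aboveI[of _ r])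
  have bb: "bdd_below (\<tau> k)" using P(3) by (auto intro!: bdd_belowI[of _ 0])
  obtain t0 where t0: "t0 \<in> \<tau> k" using P(1) by blast
  show up: "t \<le> Sup (\<tau> k)" if "t \<in> \<tau> k" for t using cSup_upper[OF that ba] .
  show "0 < Sup (\<tau> k)" proof -
    have "0 < t0" using t0 P(3) by auto
    then show ?thesis using up[OF t0] by linarith
  qed
  show "Sup (\<tau> k) \<le> r" using P(1,3) by (intro cSup_least) auto
  show "Sup (\<tau> k) / 2 \<le> t" if "t \<in> \<tau> k" for t
    using cInf_lower[OF that bb] P(4) by simp
  show "\<tau> k \<in> sets borel" using real_interval_borel_measurable[OF P(2)] .
qed

lemma adm_nonempty:
  assumes r: "0 < r"
  shows "(\<lambda>k. {r / 2^(Suc k)<..r / 2^k}) \<in> adm_intervals r"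
proof -
  have cover: "\<exists>k. t \<in> {r / 2^(Suc k)<..r / 2^k}" if t: "0 < t" "t \<le> r" for t
  proof -
    obtain n where n: "(1/2::real)^n < t / r" using real_arch_pow_inv[of "t/r" "1/2"] t r by auto
    define m where "m = (LEAST n. (1/2::real)^n < t / r)"
    have m: "(1/2::real)^m < t / r" unfolding m_def by (rule LeastI[of _ n]) (rule n)
    have m0: "m \<noteq> 0"
    proof
      assume "m = 0"
      then have "1 < t / r" using m by simp
      then show False using t r by (simp add: field_simps)
    qed
    then obtain k where k: "m = Suc k" by (cases m) auto
    have "\<not> (1/2::real)^k < t / r" using k m_def not_less_Least[of k "\<lambda>n. (1/2::real)^n < t / r"] by auto
    then have "t / r \<le> (1/2)^k" by simp
    then have "t \<le> r / 2^k" using r by (simp add: field_simps power_divide)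
    moreover have "r / 2^(Suc k) < t" using m k r by (simp add: field_simps power_divide)
    ultimately show ?thesis by auto
  qed
  show ?thesis unfolding adm_intervals_def
  proof (intro CollectI conjI allI)
    fix k :: nat
    have lt: "r / 2^(Suc k) < r / 2^k" using r by (simp add: field_simps)
    show "{r / 2 ^ Suc k<..r / 2 ^ k} \<noteq> {}" using lt by simp
    show "is_interval {r / 2 ^ Suc k<..r / 2 ^ k}" by (auto simp: is_interval_1)
    have a: "r / 2^k \<le> r" using r by (simp add: divide_le_eq)
    have b: "0 < r / 2^(Suc k)" using r by simp
    show "{r / 2 ^ Suc k<..r / 2 ^ k} \<subseteq> {0<..r}" using a b by auto
    show "Sup {r / 2 ^ Suc k<..r / 2 ^ k} \<le> 2 * Inf {r / 2 ^ Suc k<..r / 2 ^ k}"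
      using lt by simp
  next
    show "{0<..r} \<subseteq> (\<Union>k. {r / 2 ^ Suc k<..r / 2 ^ k})" using cover by auto
  qed
qed

lemma enn_le_suminf: "(f::nat \<Rightarrow> ennreal) k \<le> suminf f"
  using sum_le_suminf[of f "{k}"] by simp

lemma pointwise_bound:
  fixes \<rho>' :: "'a::metric_space \<times> 'a \<Rightarrow> ennreal" and G :: "'a \<Rightarrow> real \<Rightarrow> ennreal"
  assumes xE: "x \<in> E" and nb: "closed_nbhd E R \<subseteq> E0" and r: "0 < r" "r \<le> R"
    and \<tau>: "\<tau> \<in> adm_intervals r"
    and Gb: "\<forall>(x, x')\<in>D. x \<in> E \<longrightarrow> x' \<in> cball x R - {x} \<longrightarrow>
                      ennreal (diffquot f x x' powr p) \<le> G x (dist x x') + G x' (dist x x')"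
    and D: "D \<subseteq> E0 \<times> E0" "(E0 \<times> E0) - D \<subseteq> N" and xN: "(x, x') \<notin> N"
    and dx: "x \<in> E0 \<longrightarrow> (\<forall>k. (SUP r'\<in>{Sup (\<tau> k)/2..Sup (\<tau> k)}. G x r') \<le> ennreal C * G x (Sup (\<tau> k)))"
    and dx': "x' \<in> E0 \<longrightarrow> (\<forall>k. (SUP r'\<in>{Sup (\<tau> k)/2..Sup (\<tau> k)}. G x' r') \<le> ennreal C * G x' (Sup (\<tau> k)))"
  shows "ennreal (diffquot f x x' powr p) * \<rho>' (x, x') * indicator (cball x r) x' \<le>
    (\<Sum>k. ennreal C * (G x (Sup (\<tau> k)) * indicator E0 x * (indicator (\<tau> k) (dist x x') * \<rho>' (x, x'))
        + indicator (\<tau> k) (dist x x') * (G x' (Sup (\<tau> k)) * indicator E0 x') * \<rho>' (x, x')))"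
    (is "_ \<le> suminf ?F")
proof (cases "x' \<in> cball x r \<and> x' \<noteq> x")
  case False
  then have "x' \<notin> cball x r \<or> x' = x" by blast
  then have "ennreal (diffquot f x x' powr p) * \<rho>' (x, x') * indicator (cball x r) x' = 0"
    by (elim disjE) (simp_all add: diffquot_def)
  then show ?thesis using zero_le[of "suminf ?F"] by (simp only:)
next
  case True
  define d where "d = dist x x'"
  have d: "0 < d" "d \<le> r" using True unfolding d_def by auto
  then obtain k where k: "d \<in> \<tau> k" using adm_props(5)[OF \<tau>] by auto
  have x'E0: "x' \<in> E0"
  proof -
    have "infdist x' E \<le> dist x' x" by (rule infdist_le[OF xE])
    then have "x' \<in> closed_nbhd E R" unfolding closed_nbhd_def using xE d r
      by (auto simp: d_def dist_commute)
    then show ?thesis using nb by auto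
  qed
  have xE0: "x \<in> E0" using xE nb r unfolding closed_nbhd_def by (auto simp: infdist_zero)
  have inD: "(x, x') \<in> D" using D xN xE0 x'E0 by auto
  have "x' \<in> cball x R - {x}" using True r by auto
  then have Q: "ennreal (diffquot f x x' powr p) \<le> G x d + G x' d"
    using Gb inD xE unfolding d_def by auto
  have dk: "d \<in> {Sup (\<tau> k)/2..Sup (\<tau> k)}" using adm_Sup(3,4)[OF \<tau> k] by auto
  have "G x d \<le> (SUP r'\<in>{Sup (\<tau> k)/2..Sup (\<tau> k)}. G x r')" by (rule SUP_upper[OF dk])
  also have "\<dots> \<le> ennreal C * G x (Sup (\<tau> k))" using dx xE0 by auto
  finally have G1: "G x d \<le> ennreal C * G x (Sup (\<tau> k))" .
  have "G x' d \<le> (SUP r'\<in>{Sup (\<tau> k)/2..Sup (\<tau> k)}. G x' r')" by (rule SUP_upper[OF dk])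
  also have "\<dots> \<le> ennreal C * G x' (Sup (\<tau> k))" using dx' x'E0 by auto
  finally have G2: "G x' d \<le> ennreal C * G x' (Sup (\<tau> k))" .
  have "ennreal (diffquot f x x' powr p) * \<rho>' (x, x') * indicator (cball x r) x'
      = ennreal (diffquot f x x' powr p) * \<rho>' (x, x')" using True by simp
  also have "\<dots> \<le> (ennreal C * G x (Sup (\<tau> k)) + ennreal C * G x' (Sup (\<tau> k))) * \<rho>' (x, x')"
    using Q G1 G2 by (intro mult_right_mono) (auto intro: order_trans add_mono)
  also have "\<dots> = ennreal C * (G x (Sup (\<tau> k)) * indicator E0 x * (indicator (\<tau> k) (dist x x') * \<rho>' (x, x'))
        + indicator (\<tau> k) (dist x x') * (G x' (Sup (\<tau> k)) * indicator E0 x') * \<rho>' (x, x'))"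
    using k xE0 x'E0 unfolding d_def by (simp add: algebra_simps)
  also have "\<dots> \<le> suminf ?F" using enn_le_suminf[of ?F k] by simp
  finally show ?thesis .
qed

lemma main_bound:
  fixes M :: "'a::metric_space measure" and \<rho> \<rho>' :: "'a \<times> 'a \<Rightarrow> ennreal"
    and E0 E :: "'a set" and f :: "'a \<Rightarrow> 'b::metric_space" and p R C r :: real
    and G :: "'a \<Rightarrow> real \<Rightarrow> ennreal" and \<tau> :: "nat \<Rightarrow> real set"
  assumes sf: "sigma_finite_measure M" and space: "space M = UNIV"
    and borel_sets: "sets borel \<subseteq> sets M"
    and separable: "\<exists>S::'a set. countable S \<and> closure S = UNIV"
    and \<rho>'_meas: "\<rho>' \<in> borel_measurable (M \<Otimes>\<^sub>M M)"
    and \<rho>'_ae: "AE z in M \<Otimes>\<^sub>M M. \<rho> z = \<rho>' z"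
    and E0_meas: "E0 \<in> sets M" and E_meas: "E \<in> sets M"
    and nb: "closed_nbhd E R \<subseteq> E0"
    and G_meas: "\<forall>r\<in>{0<..R}. (\<lambda>x. G x r) \<in> borel_measurable (restrict_space M E0)"
    and G_doubling: "\<forall>r\<in>{0<..R}. AE x in M. x \<in> E0 \<longrightarrow>
                       (SUP r'\<in>{r/2..r}. G x r') \<le> ennreal C * G x r"
    and D: "D \<subseteq> E0 \<times> E0" "N \<in> null_sets (M \<Otimes>\<^sub>M M)" "(E0 \<times> E0) - D \<subseteq> N"
    and Gb: "\<forall>(x, x')\<in>D. x \<in> E \<longrightarrow> x' \<in> cball x R - {x} \<longrightarrow>
                      ennreal (diffquot f x x' powr p) \<le> G x (dist x x') + G x' (dist x x')"
    and r: "0 < r" "r \<le> R" and \<tau>: "\<tau> \<in> adm_intervals r"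
  shows "(\<integral>\<^sup>+ x \<in> E. (\<integral>\<^sup>+ x' \<in> cball x r. ennreal (diffquot f x x' powr p) * \<rho> (x, x') \<partial>M) \<partial>M)
           \<le> ennreal C * IU_seq M E \<rho> \<tau> * (SUP r'\<in>{0<..r}. \<integral>\<^sup>+ x \<in> E0. G x r' \<partial>M)"
proof -
  interpret sigma_finite_measure M by (rule sf)
  interpret P: pair_sigma_finite M M by (simp add: pair_sigma_finite_def sf)
  define s where "s k = Sup (\<tau> k)" for k
  define g where "g k y = G y (s k) * indicator E0 y" for k y
  define F where "F k x x' = ennreal C * (g k x * (indicator (\<tau> k) (dist x x') * \<rho>' (x, x'))
        + indicator (\<tau> k) (dist x x') * g k x' * \<rho>' (x, x'))" for k x x'
  define S where "S = (SUP r'\<in>{0<..r}. \<integral>\<^sup>+ x \<in> E0. G x r' \<partial>M)"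
  define ess where "ess k = ess_sup_on M (closed_nbhd E (s k))
      (\<lambda>x. \<integral>\<^sup>+ x' \<in> annulus x (\<tau> k). (\<rho> (x, x') + \<rho> (x', x)) \<partial>M)" for k
  have sR: "s k \<in> {0<..R}" "s k \<in> {0<..r}" for k
    using adm_Sup(1,2)[OF \<tau>, of k] r unfolding s_def by auto
  have md: "(\<lambda>z. dist (fst z) (snd z)) \<in> borel_measurable (M \<Otimes>\<^sub>M M)"
    by (rule dist_pair_meas[OF space borel_sets separable])
  have mi[measurable]: "(\<lambda>z. indicator (\<tau> k) (dist (fst z) (snd z)) :: ennreal) \<in> borel_measurable (M \<Otimes>\<^sub>M M)" for k
    by (rule measurable_compose[OF md borel_measurable_indicator[OF adm_Sup(5)[OF \<tau>]]])
  have mg[measurable]: "g k \<in> borel_measurable M" for k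
  proof -
    have "(\<lambda>x. G x (s k)) \<in> borel_measurable (restrict_space M E0)" using G_meas sR(1)[of k] by blast
    then show ?thesis unfolding g_def[abs_def]
      by (subst (asm) borel_measurable_restrict_space_iff_ennreal) (use E0_meas space in auto)
  qed
  note [measurable] = \<rho>'_meas E_meas E0_meas
  have mF: "(\<lambda>z. F k (fst z) (snd z)) \<in> borel_measurable (M \<Otimes>\<^sub>M M)" for k
    unfolding F_def by measurable
  have mF1: "(\<lambda>x'. F k x x') \<in> borel_measurable M" for k x
    using measurable_comp[OF measurable_Pair1'[of x M M] mF[of k]] space by (simp add: o_def)
  have mFi: "(\<lambda>x. (\<integral>\<^sup>+ x'. F k x x' \<partial>M)) \<in> borel_measurable M" for k
    using borel_measurable_nn_integral[of "F k" M] mF[of k] by (simp add: case_prod_beta')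
  obtain N0 where N0: "{z\<in>space (M \<Otimes>\<^sub>M M). \<rho> z \<noteq> \<rho>' z} \<subseteq> N0" "emeasure (M \<Otimes>\<^sub>M M) N0 = 0" "N0 \<in> sets (M \<Otimes>\<^sub>M M)"
    using \<rho>'_ae by (auto elim!: AE_E)
  have N0': "\<rho> (x, y) = \<rho>' (x, y)" if "(x, y) \<notin> N0" for x y
    using N0(1) that space by (auto simp: space_pair_measure)
  have ae_N0: "AE x in M. AE y in M. (x, y) \<notin> N0"
    using P.AE_pair[OF AE_not_in[of N0 "M \<Otimes>\<^sub>M M"]] N0 by auto
  have ae_N0'': "AE y in M. AE x in M. (x, y) \<notin> N0"
  proof -
    have "{z \<in> space (M \<Otimes>\<^sub>M M). (fst z, snd z) \<notin> N0} = space (M \<Otimes>\<^sub>M M) - N0" by auto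
    then have "{z \<in> space (M \<Otimes>\<^sub>M M). (fst z, snd z) \<notin> N0} \<in> sets (M \<Otimes>\<^sub>M M)" using N0(3) by auto
    from P.AE_commute[OF this] ae_N0 show ?thesis by simp
  qed
  have ae_N0': "AE x in M. AE y in M. (y, x) \<notin> N0" using ae_N0'' .
  have ae_N: "AE x in M. AE y in M. (x, y) \<notin> N"
    using P.AE_pair[OF AE_not_in[OF D(2)]] by simp
  define dblP where "dblP y \<longleftrightarrow> (y \<in> E0 \<longrightarrow> (\<forall>k. (SUP r'\<in>{s k/2..s k}. G y r') \<le> ennreal C * G y (s k)))" for y
  have ae_dbl: "AE y in M. dblP y"
  proof -
    have "\<forall>k. AE y in M. y \<in> E0 \<longrightarrow> (SUP r'\<in>{s k/2..s k}. G y r') \<le> ennreal C * G y (s k)"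
      using G_doubling sR(1) by blast
    then have "AE y in M. \<forall>k. y \<in> E0 \<longrightarrow> (SUP r'\<in>{s k/2..s k}. G y r') \<le> ennreal C * G y (s k)"
      by (rule AE_all_countable[THEN iffD2])
    then show ?thesis unfolding dblP_def by auto
  qed
  have good: "AE x in M. (AE y in M. (x, y) \<notin> N \<and> (x, y) \<notin> N0 \<and> (y, x) \<notin> N0 \<and> dblP y) \<and> dblP x"
    using ae_N ae_N0 ae_N0' ae_dbl
  proof eventually_elim
    case (elim x)
    have "AE y in M. (x, y) \<notin> N \<and> (x, y) \<notin> N0 \<and> (y, x) \<notin> N0 \<and> dblP y"
      using elim(1-3) ae_dbl by eventually_elim auto
    then show ?case using elim(4) by simp
  qed
  have stepa: "AE x in M. (\<integral>\<^sup>+x'. ennreal (diffquot f x x' powr p) * \<rho> (x, x') * indicator (cball x r) x' \<partial>M) * indicator E x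
      \<le> (\<Sum>k. \<integral>\<^sup>+x'. F k x x' \<partial>M) * indicator E x"
    using good
  proof eventually_elim
    case (elim x)
    have ae: "AE y in M. (x, y) \<notin> N \<and> (x, y) \<notin> N0 \<and> (y, x) \<notin> N0 \<and> dblP y" and dx: "dblP x"
      using elim by auto
    show ?case
    proof (cases "x \<in> E")
      case False then show ?thesis by simp
    next
      case True
      have "(\<integral>\<^sup>+x'. ennreal (diffquot f x x' powr p) * \<rho> (x, x') * indicator (cball x r) x' \<partial>M)
          = (\<integral>\<^sup>+x'. ennreal (diffquot f x x' powr p) * \<rho>' (x, x') * indicator (cball x r) x' \<partial>M)"
        by (rule nn_integral_cong_AE) (use ae in \<open>eventually_elim, auto simp: N0'\<close>)
      also have "\<dots> \<le> (\<integral>\<^sup>+x'. (\<Sum>k. F k x x') \<partial>M)"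
      proof (rule nn_integral_mono_AE)
        show "AE x' in M. ennreal (diffquot f x x' powr p) * \<rho>' (x, x') * indicator (cball x r) x' \<le> (\<Sum>k. F k x x')"
          using ae
        proof eventually_elim
          case (elim x')
          show ?case unfolding F_def g_def s_def
            by (rule pointwise_bound[OF True nb r \<tau> Gb D(1) D(3)])
               (use elim dx in \<open>auto simp: dblP_def s_def\<close>)
        qed
      qed
      also have "\<dots> = (\<Sum>k. \<integral>\<^sup>+x'. F k x x' \<partial>M)" by (rule nn_integral_suminf[OF mF1])
      finally show ?thesis using True by simp
    qed
  qed
  have sec1: "(\<lambda>x'. h x x') \<in> borel_measurable M"
    if "(\<lambda>z. h (fst z) (snd z)) \<in> borel_measurable (M \<Otimes>\<^sub>M M)" for h :: "'a \<Rightarrow> 'a \<Rightarrow> ennreal" and x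
    using measurable_comp[OF measurable_Pair1'[of x M M] that] space by (simp add: o_def)
  have sec2: "(\<lambda>z. h z y) \<in> borel_measurable M"
    if "(\<lambda>z. h (fst z) (snd z)) \<in> borel_measurable (M \<Otimes>\<^sub>M M)" for h :: "'a \<Rightarrow> 'a \<Rightarrow> ennreal" and y
    using measurable_comp[OF measurable_Pair2'[of y M M] that] space by (simp add: o_def)
  have int1: "(\<lambda>x. \<integral>\<^sup>+x'. h x x' \<partial>M) \<in> borel_measurable M"
    if "(\<lambda>z. h (fst z) (snd z)) \<in> borel_measurable (M \<Otimes>\<^sub>M M)" for h :: "'a \<Rightarrow> 'a \<Rightarrow> ennreal"
    using borel_measurable_nn_integral[of h M] that by (simp add: case_prod_beta')
  have int2: "(\<lambda>y. \<integral>\<^sup>+z. h z y \<partial>M) \<in> borel_measurable M"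
    if "(\<lambda>z. h (fst z) (snd z)) \<in> borel_measurable (M \<Otimes>\<^sub>M M)" for h :: "'a \<Rightarrow> 'a \<Rightarrow> ennreal"
  proof -
    have "(\<lambda>z. h (snd z) (fst z)) \<in> borel_measurable (M \<Otimes>\<^sub>M M)"
      using measurable_comp[OF measurable_pair_swap' that] by (simp add: o_def case_prod_beta')
    from int1[OF this] show ?thesis by simp
  qed
  have mi'[measurable]: "(\<lambda>z. indicator (\<tau> k) (dist (snd z) (fst z)) :: ennreal) \<in> borel_measurable (M \<Otimes>\<^sub>M M)" for k
  proof -
    have eq: "(\<lambda>z. indicator (\<tau> k) (dist (snd z) (fst z)) :: ennreal) = (\<lambda>z. indicator (\<tau> k) (dist (fst z) (snd z)))"
      by (simp add: dist_commute)
    show ?thesis unfolding eq by (rule mi)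
  qed
  have stepc: "(\<integral>\<^sup>+x. (\<integral>\<^sup>+x'. F k x x' \<partial>M) * indicator E x \<partial>M) \<le> ennreal C * ess k * S" for k
  proof -
    define T1 where "T1 y = (\<integral>\<^sup>+z. indicator (\<tau> k) (dist y z) * \<rho>' (y, z) \<partial>M)" for y
    define U where "U y = (\<integral>\<^sup>+z. indicator (\<tau> k) (dist y z) * \<rho>' (z, y) * indicator E z \<partial>M)" for y
    define H1 where "H1 x x' = (g k x * indicator E x) * (indicator (\<tau> k) (dist x x') * \<rho>' (x, x'))" for x x'
    define H2 where "H2 x x' = g k x' * (indicator (\<tau> k) (dist x' x) * \<rho>' (x, x') * indicator E x)" for x x'
    have mH1: "(\<lambda>z. H1 (fst z) (snd z)) \<in> borel_measurable (M \<Otimes>\<^sub>M M)" unfolding H1_def by measurable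
    have mH2: "(\<lambda>z. H2 (fst z) (snd z)) \<in> borel_measurable (M \<Otimes>\<^sub>M M)" unfolding H2_def by measurable
    have mT1: "T1 \<in> borel_measurable M" unfolding T1_def
      by (rule int1[of "\<lambda>y z. indicator (\<tau> k) (dist y z) * \<rho>' (y, z)"]) measurable
    have mU: "U \<in> borel_measurable M" unfolding U_def
      by (rule int2[of "\<lambda>z y. indicator (\<tau> k) (dist y z) * \<rho>' (z, y) * indicator E z"]) measurable
    have "(\<integral>\<^sup>+x. (\<integral>\<^sup>+x'. F k x x' \<partial>M) * indicator E x \<partial>M)
        = (\<integral>\<^sup>+x. (\<integral>\<^sup>+x'. ennreal C * (H1 x x' + H2 x x') \<partial>M) \<partial>M)"
    proof (rule nn_integral_cong)
      fix x
      have "(\<integral>\<^sup>+x'. F k x x' \<partial>M) * indicator E x = (\<integral>\<^sup>+x'. F k x x' * indicator E x \<partial>M)"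
        by (rule nn_integral_multc[OF mF1, symmetric])
      also have "\<dots> = (\<integral>\<^sup>+x'. ennreal C * (H1 x x' + H2 x x') \<partial>M)"
        unfolding F_def H1_def H2_def by (rule nn_integral_cong) (simp add: algebra_simps dist_commute)
      finally show "(\<integral>\<^sup>+x'. F k x x' \<partial>M) * indicator E x = (\<integral>\<^sup>+x'. ennreal C * (H1 x x' + H2 x x') \<partial>M)" .
    qed
    also have "\<dots> = (\<integral>\<^sup>+x. ennreal C * ((\<integral>\<^sup>+x'. H1 x x' \<partial>M) + (\<integral>\<^sup>+x'. H2 x x' \<partial>M)) \<partial>M)"
    proof (rule nn_integral_cong)
      fix x
      have m1: "(\<lambda>x'. H1 x x') \<in> borel_measurable M" by (rule sec1[OF mH1])
      have m2: "(\<lambda>x'. H2 x x') \<in> borel_measurable M" by (rule sec1[OF mH2])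
      have m12: "(\<lambda>x'. H1 x x' + H2 x x') \<in> borel_measurable M" using m1 m2 by (rule borel_measurable_add)
      show "(\<integral>\<^sup>+x'. ennreal C * (H1 x x' + H2 x x') \<partial>M) = ennreal C * ((\<integral>\<^sup>+x'. H1 x x' \<partial>M) + (\<integral>\<^sup>+x'. H2 x x' \<partial>M))"
        by (simp only: nn_integral_cmult[OF m12] nn_integral_add[OF m1 m2])
    qed
    also have "\<dots> = ennreal C * ((\<integral>\<^sup>+x. (\<integral>\<^sup>+x'. H1 x x' \<partial>M) \<partial>M) + (\<integral>\<^sup>+x. (\<integral>\<^sup>+x'. H2 x x' \<partial>M) \<partial>M))"
    proof -
      have n1: "(\<lambda>x. \<integral>\<^sup>+x'. H1 x x' \<partial>M) \<in> borel_measurable M" by (rule int1[OF mH1])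
      have n2: "(\<lambda>x. \<integral>\<^sup>+x'. H2 x x' \<partial>M) \<in> borel_measurable M" by (rule int1[OF mH2])
      have n12: "(\<lambda>x. (\<integral>\<^sup>+x'. H1 x x' \<partial>M) + (\<integral>\<^sup>+x'. H2 x x' \<partial>M)) \<in> borel_measurable M"
        using n1 n2 by (rule borel_measurable_add)
      show ?thesis by (simp only: nn_integral_cmult[OF n12] nn_integral_add[OF n1 n2])
    qed
    also have "(\<integral>\<^sup>+x. (\<integral>\<^sup>+x'. H1 x x' \<partial>M) \<partial>M) = (\<integral>\<^sup>+y. g k y * indicator E y * T1 y \<partial>M)"
    proof -
      have hm: "(\<lambda>z. indicator (\<tau> k) (dist (fst z) (snd z)) * \<rho>' (fst z, snd z)) \<in> borel_measurable (M \<Otimes>\<^sub>M M)"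
        by measurable
      show ?thesis unfolding H1_def T1_def
        by (rule nn_integral_cong) (rule nn_integral_cmult[OF sec1[of "\<lambda>y z. indicator (\<tau> k) (dist y z) * \<rho>' (y, z)", OF hm]])
    qed
    also have "(\<integral>\<^sup>+x. (\<integral>\<^sup>+x'. H2 x x' \<partial>M) \<partial>M) = (\<integral>\<^sup>+y. (\<integral>\<^sup>+x. H2 x y \<partial>M) \<partial>M)"
      using P.Fubini[OF mH2[unfolded split_beta'[symmetric]]] by simp
    also have "\<dots> = (\<integral>\<^sup>+y. g k y * U y \<partial>M)"
    proof -
      have hm: "(\<lambda>w. indicator (\<tau> k) (dist (snd w) (fst w)) * \<rho>' (fst w, snd w) * indicator E (fst w)) \<in> borel_measurable (M \<Otimes>\<^sub>M M)"
        by measurable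
      show ?thesis unfolding H2_def U_def
        by (rule nn_integral_cong) (rule nn_integral_cmult[OF sec2[of "\<lambda>z y. indicator (\<tau> k) (dist y z) * \<rho>' (z, y) * indicator E z", OF hm]])
    qed
    also have "(\<integral>\<^sup>+y. g k y * indicator E y * T1 y \<partial>M) + (\<integral>\<^sup>+y. g k y * U y \<partial>M)
        = (\<integral>\<^sup>+y. g k y * (indicator E y * T1 y + U y) \<partial>M)"
      using mT1 mU by (simp add: nn_integral_add distrib_left mult.assoc)
    also have "(\<integral>\<^sup>+y. g k y * (indicator E y * T1 y + U y) \<partial>M) \<le> (\<integral>\<^sup>+y. g k y * ess k \<partial>M)"
    proof (rule nn_integral_mono_AE)
      define B where "B = closed_nbhd E (s k)"
      define \<Phi> where "\<Phi> y = (\<integral>\<^sup>+z. (\<rho> (y, z) + \<rho> (z, y)) * indicator (annulus y (\<tau> k)) z \<partial>M)" for y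
      define \<Phi>' where "\<Phi>' y = (\<integral>\<^sup>+z. (\<rho>' (y, z) + \<rho>' (z, y)) * indicator (annulus y (\<tau> k)) z \<partial>M)" for y
      have ae_ess: "AE y in M. y \<in> B \<longrightarrow> \<Phi> y \<le> ess k"
        unfolding ess_def B_def \<Phi>_def by (rule ess_sup_AE)
      have ae_eq: "AE y in M. \<Phi> y = \<Phi>' y"
        using ae_N0 ae_N0'
      proof eventually_elim
        case (elim y)
        show ?case unfolding \<Phi>_def \<Phi>'_def
          by (rule nn_integral_cong_AE) (use elim in \<open>eventually_elim, auto simp: N0'\<close>)
      qed
      have hm1: "(\<lambda>z. indicator (\<tau> k) (dist (fst z) (snd z)) * \<rho>' (fst z, snd z)) \<in> borel_measurable (M \<Otimes>\<^sub>M M)"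
        by measurable
      have hm2: "(\<lambda>w. indicator (\<tau> k) (dist (snd w) (fst w)) * \<rho>' (fst w, snd w)) \<in> borel_measurable (M \<Otimes>\<^sub>M M)"
        by measurable
      have pw: "indicator E y * T1 y + U y \<le> indicator B y * \<Phi>' y" for y
      proof (cases "y \<in> B")
        case True
        have a1: "indicator E y * T1 y \<le> T1 y" by (cases "y \<in> E") auto
        have a2: "U y \<le> (\<integral>\<^sup>+z. indicator (\<tau> k) (dist y z) * \<rho>' (z, y) \<partial>M)"
          unfolding U_def by (rule nn_integral_mono) (auto simp: indicator_def)
        have m1: "(\<lambda>z. indicator (\<tau> k) (dist y z) * \<rho>' (y, z)) \<in> borel_measurable M"
          by (rule sec1[of "\<lambda>y z. indicator (\<tau> k) (dist y z) * \<rho>' (y, z)", OF hm1])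
        have m2: "(\<lambda>z. indicator (\<tau> k) (dist y z) * \<rho>' (z, y)) \<in> borel_measurable M"
          by (rule sec2[of "\<lambda>z y. indicator (\<tau> k) (dist y z) * \<rho>' (z, y)", OF hm2])
        have "indicator E y * T1 y + U y \<le> T1 y + (\<integral>\<^sup>+z. indicator (\<tau> k) (dist y z) * \<rho>' (z, y) \<partial>M)"
          using a1 a2 by (rule add_mono)
        also have "\<dots> = (\<integral>\<^sup>+z. indicator (\<tau> k) (dist y z) * \<rho>' (y, z) + indicator (\<tau> k) (dist y z) * \<rho>' (z, y) \<partial>M)"
          unfolding T1_def by (rule nn_integral_add[OF m1 m2, symmetric])
        also have "\<dots> = \<Phi>' y"
          unfolding \<Phi>'_def by (rule nn_integral_cong) (simp add: annulus_def indicator_def)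
        finally show ?thesis using True by simp
      next
        case False
        have yE: "y \<notin> E"
        proof
          assume "y \<in> E"
          then show False using False sR(1)[of k] unfolding B_def closed_nbhd_def
            by (auto simp: infdist_zero)
        qed
        have "U y = (\<integral>\<^sup>+z. 0 \<partial>M)" unfolding U_def
        proof (rule nn_integral_cong)
          fix z
          show "indicator (\<tau> k) (dist y z) * \<rho>' (z, y) * indicator E z = (0::ennreal)"
          proof (cases "z \<in> E \<and> dist y z \<in> \<tau> k")
            case True
            then have "infdist y E \<le> s k"
              using infdist_le[of z E y] adm_Sup(3)[OF \<tau>, of "dist y z" k] unfolding s_def by auto
            then have "y \<in> B" using True unfolding B_def closed_nbhd_def by auto
            then show ?thesis using False by simp
          qed auto
        qed
        then show ?thesis using yE by simp
      qed
      show "AE y in M. g k y * (indicator E y * T1 y + U y) \<le> g k y * ess k"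
        using ae_ess ae_eq
      proof eventually_elim
        case (elim y)
        have "indicator E y * T1 y + U y \<le> ess k"
        proof (cases "y \<in> B")
          case True
          then show ?thesis using pw[of y] elim by simp
        next
          case False
          then have "indicator E y * T1 y + U y \<le> 0" using pw[of y] by simp
          then show ?thesis by (metis order_trans zero_le)
        qed
        then show ?case by (rule mult_left_mono) simp
      qed
    qed
    also have "\<dots> = (\<integral>\<^sup>+y. g k y \<partial>M) * ess k"
      by (rule nn_integral_multc[OF mg])
    also have "(\<integral>\<^sup>+y. g k y \<partial>M) * ess k \<le> S * ess k"
    proof (rule mult_right_mono)
      show "(\<integral>\<^sup>+y. g k y \<partial>M) \<le> S"
        unfolding S_def g_def by (rule SUP_upper[OF sR(2)])
    qed simp
    finally have "(\<integral>\<^sup>+x. (\<integral>\<^sup>+x'. F k x x' \<partial>M) * indicator E x \<partial>M) \<le> ennreal C * (S * ess k)"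
      by (simp add: mult_left_mono)
    then show ?thesis by (simp add: ac_simps)
  qed
  have "(\<integral>\<^sup>+ x \<in> E. (\<integral>\<^sup>+ x' \<in> cball x r. ennreal (diffquot f x x' powr p) * \<rho> (x, x') \<partial>M) \<partial>M)
      \<le> (\<integral>\<^sup>+x. (\<Sum>k. \<integral>\<^sup>+x'. F k x x' \<partial>M) * indicator E x \<partial>M)"
    by (rule nn_integral_mono_AE[OF stepa])
  also have "\<dots> = (\<integral>\<^sup>+x. (\<Sum>k. (\<integral>\<^sup>+x'. F k x x' \<partial>M) * indicator E x) \<partial>M)"
    by simp
  also have "\<dots> = (\<Sum>k. \<integral>\<^sup>+x. (\<integral>\<^sup>+x'. F k x x' \<partial>M) * indicator E x \<partial>M)"
    by (rule nn_integral_suminf) (use mFi in measurable)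
  also have "\<dots> \<le> (\<Sum>k. ennreal C * ess k * S)"
    by (intro suminf_le stepc) auto
  also have "\<dots> = ennreal C * (\<Sum>k. ess k) * S" by simp
  also have "\<dots> = ennreal C * IU_seq M E \<rho> \<tau> * S"
    unfolding IU_seq_def ess_def s_def by simp
  finally show ?thesis unfolding S_def .
qed

lemma zero_case:
  fixes M :: "'a::metric_space measure" and \<rho> \<rho>' :: "'a \<times> 'a \<Rightarrow> ennreal"
    and E :: "'a set" and f :: "'a \<Rightarrow> 'b::metric_space" and p r :: real
  assumes sf: "sigma_finite_measure M" and space: "space M = UNIV"
    and borel_sets: "sets borel \<subseteq> sets M"
    and \<rho>'_meas: "\<rho>' \<in> borel_measurable (M \<Otimes>\<^sub>M M)"
    and \<rho>'_ae: "AE z in M \<Otimes>\<^sub>M M. \<rho> z = \<rho>' z"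
    and r: "0 < r" and IU0: "IU M E r \<rho> = 0"
  shows "(\<integral>\<^sup>+ x \<in> E. (\<integral>\<^sup>+ x' \<in> cball x r. ennreal (diffquot f x x' powr p) * \<rho> (x, x') \<partial>M) \<partial>M) = 0"
proof -
  interpret sigma_finite_measure M by (rule sf)
  interpret P: pair_sigma_finite M M by (simp add: pair_sigma_finite_def sf)
  obtain N0 where N0: "{z\<in>space (M \<Otimes>\<^sub>M M). \<rho> z \<noteq> \<rho>' z} \<subseteq> N0" "emeasure (M \<Otimes>\<^sub>M M) N0 = 0" "N0 \<in> sets (M \<Otimes>\<^sub>M M)"
    using \<rho>'_ae by (auto elim!: AE_E)
  have N0': "\<rho> (x, y) = \<rho>' (x, y)" if "(x, y) \<notin> N0" for x y
    using N0(1) that space by (auto simp: space_pair_measure)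
  have ae_N0: "AE x in M. AE y in M. (x, y) \<notin> N0"
    using P.AE_pair[OF AE_not_in[of N0 "M \<Otimes>\<^sub>M M"]] N0 by auto
  have m\<rho>1: "(\<lambda>z. \<rho>' (x, z)) \<in> borel_measurable M" for x
    using measurable_comp[OF measurable_Pair1'[of x M M] \<rho>'_meas] space by (simp add: o_def)
  have mann: "annulus x T \<in> sets M" if "T \<in> sets borel" for x T
  proof -
    have "(\<lambda>z. dist x z) \<in> borel_measurable M"
      by (rule cont_meas[OF _ borel_sets space]) (intro continuous_intros)
    from measurable_sets[OF this that] show ?thesis using space by (simp add: annulus_def vimage_def)
  qed
  define H where "H x = (\<integral>\<^sup>+z. \<rho>' (x, z) * indicator (cball x r - {x}) z \<partial>M)" for x
  have bound: "AE x in M. x \<in> E \<longrightarrow> H x \<le> IU_seq M E \<rho> \<tau>" if \<tau>: "\<tau> \<in> adm_intervals r" for \<tau>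
  proof -
    define ess where "ess k = ess_sup_on M (closed_nbhd E (Sup (\<tau> k)))
      (\<lambda>x. \<integral>\<^sup>+ x' \<in> annulus x (\<tau> k). (\<rho> (x, x') + \<rho> (x', x)) \<partial>M)" for k
    have ae_ess: "AE x in M. \<forall>k. x \<in> closed_nbhd E (Sup (\<tau> k)) \<longrightarrow>
        (\<integral>\<^sup>+ x' \<in> annulus x (\<tau> k). (\<rho> (x, x') + \<rho> (x', x)) \<partial>M) \<le> ess k"
      unfolding ess_def by (rule AE_all_countable[THEN iffD2]) (intro allI ess_sup_AE)
    show ?thesis using ae_ess ae_N0
    proof eventually_elim
      case (elim x)
      show ?case
      proof
        assume xE: "x \<in> E"
        have "H x \<le> (\<integral>\<^sup>+z. (\<Sum>k. \<rho>' (x, z) * indicator (annulus x (\<tau> k)) z) \<partial>M)"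
          unfolding H_def
        proof (rule nn_integral_mono)
          fix z
          show "\<rho>' (x, z) * indicator (cball x r - {x}) z \<le> (\<Sum>k. \<rho>' (x, z) * indicator (annulus x (\<tau> k)) z)"
          proof (cases "z \<in> cball x r - {x}")
            case True
            then have "dist x z \<in> {0<..r}" by auto
            then obtain k where k: "dist x z \<in> \<tau> k" using adm_props(5)[OF \<tau>] by blast
            have "\<rho>' (x, z) * indicator (cball x r - {x}) z = \<rho>' (x, z) * indicator (annulus x (\<tau> k)) z"
              using True k by (simp add: annulus_def)
            also have "\<dots> \<le> (\<Sum>k. \<rho>' (x, z) * indicator (annulus x (\<tau> k)) z)"
              by (rule enn_le_suminf[of "\<lambda>k. \<rho>' (x, z) * indicator (annulus x (\<tau> k)) z"])
            finally show ?thesis .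
          qed simp
        qed
        also have "\<dots> = (\<Sum>k. \<integral>\<^sup>+z. \<rho>' (x, z) * indicator (annulus x (\<tau> k)) z \<partial>M)"
          by (rule nn_integral_suminf) (intro borel_measurable_times_ennreal m\<rho>1 borel_measurable_indicator mann adm_Sup(5)[OF \<tau>])
        also have "\<dots> \<le> (\<Sum>k. ess k)"
        proof (rule suminf_le)
          fix k
          have "(\<integral>\<^sup>+z. \<rho>' (x, z) * indicator (annulus x (\<tau> k)) z \<partial>M)
              \<le> (\<integral>\<^sup>+ x' \<in> annulus x (\<tau> k). (\<rho> (x, x') + \<rho> (x', x)) \<partial>M)"
            by (rule nn_integral_mono_AE) (use elim(2) in \<open>eventually_elim, auto simp: N0' indicator_def\<close>)
          also have "\<dots> \<le> ess k"
          proof -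
            have "x \<in> closed_nbhd E (Sup (\<tau> k))" using xE adm_Sup(1)[OF \<tau>, of k]
              unfolding closed_nbhd_def by (auto simp: infdist_zero)
            then show ?thesis using elim(1) by blast
          qed
          finally show "(\<integral>\<^sup>+z. \<rho>' (x, z) * indicator (annulus x (\<tau> k)) z \<partial>M) \<le> ess k" .
        qed auto
        finally show "H x \<le> IU_seq M E \<rho> \<tau>" unfolding IU_seq_def ess_def .
      qed
    qed
  qed
  have small: "AE x in M. x \<in> E \<longrightarrow> H x \<le> ennreal (1 / Suc n)" for n
  proof -
    have "IU M E r \<rho> < ennreal (1 / Suc n)" using IU0 by simp
    then obtain \<tau> where \<tau>: "\<tau> \<in> adm_intervals r" "IU_seq M E \<rho> \<tau> < ennreal (1 / Suc n)"
      unfolding IU_def by (auto simp: INF_less_iff)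
    show ?thesis using bound[OF \<tau>(1)] by eventually_elim (use \<tau>(2) in auto)
  qed
  have H0: "AE x in M. x \<in> E \<longrightarrow> H x = 0"
  proof -
    have "AE x in M. \<forall>n. x \<in> E \<longrightarrow> H x \<le> ennreal (1 / Suc n)"
      by (rule AE_all_countable[THEN iffD2]) (use small in blast)
    then show ?thesis
    proof eventually_elim
      case (elim x)
      show ?case
      proof
        assume "x \<in> E"
        then have n: "H x \<le> ennreal (1 / Suc n)" for n using elim by blast
        have "H x \<le> 0"
        proof (rule ennreal_le_epsilon)
          fix e :: real assume e: "0 < e"
          obtain n :: nat where "1 / Suc n < e" using e by (metis nat_approx_posE)
          then have "H x \<le> ennreal e" using n[of n] by (meson ennreal_leI less_imp_le order_trans)
          then show "H x \<le> 0 + ennreal e" by simp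
        qed
        then show "H x = 0" by simp
      qed
    qed
  qed
  have "AE x in M. (\<integral>\<^sup>+x'. ennreal (diffquot f x x' powr p) * \<rho> (x, x') * indicator (cball x r) x' \<partial>M) * indicator E x = 0"
    using H0 ae_N0
  proof eventually_elim
    case (elim x)
    show ?case
    proof (cases "x \<in> E")
      case True
      then have "H x = 0" using elim by simp
      then have "AE z in M. \<rho>' (x, z) * indicator (cball x r - {x}) z = 0"
        unfolding H_def
        by (subst (asm) nn_integral_0_iff_AE) (intro borel_measurable_times_ennreal m\<rho>1 borel_measurable_indicator; use borel_sets in auto)
      then have "AE z in M. ennreal (diffquot f x z powr p) * \<rho> (x, z) * indicator (cball x r) z = 0"
        using elim(2) by eventually_elim (auto simp: N0' diffquot_def indicator_def split: if_splits)
      then have "(\<integral>\<^sup>+x'. ennreal (diffquot f x x' powr p) * \<rho> (x, x') * indicator (cball x r) x' \<partial>M) = (\<integral>\<^sup>+x'. 0 \<partial>M)"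
        by (rule nn_integral_cong_AE)
      then show ?thesis by simp
    qed simp
  qed
  then have "(\<integral>\<^sup>+ x \<in> E. (\<integral>\<^sup>+ x' \<in> cball x r. ennreal (diffquot f x x' powr p) * \<rho> (x, x') \<partial>M) \<partial>M) = (\<integral>\<^sup>+x. 0 \<partial>M)"
    by (rule nn_integral_cong_AE)
  then show ?thesis by simp
qed

theorem proposition3p6:
  fixes M :: "'a::metric_space measure"
    and \<rho> :: "'a \<times> 'a \<Rightarrow> ennreal"
    and E0 E :: "'a set"
    and f :: "'a \<Rightarrow> 'b::metric_space"
    and p R C :: real
    and G :: "'a \<Rightarrow> real \<Rightarrow> ennreal"
  assumes space: "space M = UNIV"
    and borel_sets: "sets borel \<subseteq> sets M"
    and complete: "complete_measure M"
    and loc_finite: "\<forall>x. \<exists>s>0. emeasure M (ball x s) < \<infinity>"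
    and pos_measure: "emeasure M UNIV > 0"
    and separable: "\<exists>S::'a set. countable S \<and> closure S = UNIV"
    and loc_complete: "\<forall>x::'a. \<exists>s>0. Topological_Spaces.complete (cball x s)"
    and pos_diam: "\<exists>x y::'a. x \<noteq> y"
    and p: "1 \<le> p"
    and \<rho>_meas: "\<rho> \<in> borel_measurable (completion (M \<Otimes>\<^sub>M M))"
    and E0_meas: "E0 \<in> sets M"
    and f_meas: "f \<in> meas_maps M E0"
    and E_meas: "E \<in> sets M"
    and E_in: "well_inside E E0"
    and R: "R > 0" "closed_nbhd E R \<subseteq> E0"
    and G_meas: "\<forall>r\<in>{0<..R}. (\<lambda>x. G x r) \<in> borel_measurable (restrict_space M E0)"
    and C: "C > 0"
    and G_doubling: "\<forall>r\<in>{0<..R}. AE x in M. x \<in> E0 \<longrightarrow>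
                       (SUP r'\<in>{r/2..r}. G x r') \<le> ennreal C * G x r"
    and G_bound: "\<exists>D \<subseteq> E0 \<times> E0. (\<exists>N\<in>null_sets (M \<Otimes>\<^sub>M M). (E0 \<times> E0) - D \<subseteq> N) \<and>
                   (\<forall>(x, x')\<in>D. x \<in> E \<longrightarrow> x' \<in> cball x R - {x} \<longrightarrow>
                      ennreal (diffquot f x x' powr p) \<le> G x (dist x x') + G x' (dist x x'))"
  shows "\<forall>r\<in>{0<..R}.
           (\<integral>\<^sup>+ x \<in> E. (\<integral>\<^sup>+ x' \<in> cball x r. ennreal (diffquot f x x' powr p) * \<rho> (x, x') \<partial>M) \<partial>M)
           \<le> ennreal C * IU M E r \<rho> * (SUP r'\<in>{0<..r}. \<integral>\<^sup>+ x \<in> E0. G x r' \<partial>M)"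
proof
  fix r assume rR: "r \<in> {0<..R}"
  have r: "0 < r" "r \<le> R" using rR by auto
  have sf: "sigma_finite_measure M"
    by (rule sigma_finite_M[OF space borel_sets loc_finite separable])
  obtain \<rho>' where \<rho>': "\<rho>' \<in> borel_measurable (M \<Otimes>\<^sub>M M)" "AE z in M \<Otimes>\<^sub>M M. \<rho> z = \<rho>' z"
    using completion_ex_borel_measurable[OF \<rho>_meas] by blast
  obtain D where D: "D \<subseteq> E0 \<times> E0" "\<exists>N\<in>null_sets (M \<Otimes>\<^sub>M M). (E0 \<times> E0) - D \<subseteq> N"
    and Gb: "\<forall>(x, x')\<in>D. x \<in> E \<longrightarrow> x' \<in> cball x R - {x} \<longrightarrow>
                      ennreal (diffquot f x x' powr p) \<le> G x (dist x x') + G x' (dist x x')"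
    using G_bound by (elim exE conjE) (rule that)
  obtain N where N: "N \<in> null_sets (M \<Otimes>\<^sub>M M)" "(E0 \<times> E0) - D \<subseteq> N" using D(2) by (elim bexE) (rule that)
  define L where "L = (\<integral>\<^sup>+ x \<in> E. (\<integral>\<^sup>+ x' \<in> cball x r. ennreal (diffquot f x x' powr p) * \<rho> (x, x') \<partial>M) \<partial>M)"
  define S where "S = (SUP r'\<in>{0<..r}. \<integral>\<^sup>+ x \<in> E0. G x r' \<partial>M)"
  have key: "L \<le> ennreal C * IU_seq M E \<rho> \<tau> * S" if \<tau>: "\<tau> \<in> adm_intervals r" for \<tau>
    unfolding L_def S_def
    by (rule main_bound[OF sf space borel_sets separable \<rho>'(1) \<rho>'(2) E0_meas E_meas R(2) G_meas
          G_doubling D(1) N(1) N(2) Gb r \<tau>])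
  have \<tau>0: "(\<lambda>k. {r / 2^(Suc k)<..r / 2^k}) \<in> adm_intervals r" by (rule adm_nonempty[OF r(1)])
  have "L \<le> ennreal C * IU M E r \<rho> * S"
  proof (cases "IU M E r \<rho> = 0")
    case True
    have "L = 0" unfolding L_def
      by (rule zero_case[OF sf space borel_sets \<rho>'(1) \<rho>'(2) r(1) True])
    then show ?thesis by simp
  next
    case IU0: False
    show ?thesis
    proof (cases "S = 0")
      case True
      then show ?thesis using key[OF \<tau>0] by simp
    next
      case S0: False
      show ?thesis
      proof (cases "S = top")
        case True
        have "ennreal C \<noteq> 0" using C by simp
        then have "ennreal C * IU M E r \<rho> * S = top" using True IU0 by (simp add: ennreal_mult_eq_top_iff)
        then show ?thesis by simp
      next
        case Stop: False
        define K where "K = ennreal C * S"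
        have K0: "K \<noteq> 0" using C S0 unfolding K_def by simp
        have Ktop: "K \<noteq> top" using Stop unfolding K_def by (simp add: ennreal_mult_eq_top_iff)
        have "L / K \<le> IU M E r \<rho>"
          unfolding IU_def
        proof (rule INF_greatest)
          fix \<tau> assume \<tau>: "\<tau> \<in> adm_intervals r"
          have "L \<le> IU_seq M E \<rho> \<tau> * K" using key[OF \<tau>] unfolding K_def by (simp add: ac_simps)
          then have "L / K \<le> IU_seq M E \<rho> \<tau> * K / K" by (rule divide_right_mono_ennreal)
          also have "\<dots> = IU_seq M E \<rho> \<tau>" using K0 Ktop by (rule ennreal_mult_divide_eq)
          finally show "L / K \<le> IU_seq M E \<rho> \<tau>" .
        qed
        then have "L / K * K \<le> IU M E r \<rho> * K" by (rule mult_right_mono) simp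
        moreover have "L / K * K = L"
        proof -
          have "L / K * K = K * (L / K)" by (rule mult.commute)
          also have "\<dots> = K * L / K" by (rule ennreal_times_divide)
          also have "\<dots> = L * K / K" by (simp only: mult.commute)
          also have "\<dots> = L" using K0 Ktop by (rule ennreal_mult_divide_eq)
          finally show ?thesis .
        qed
        ultimately show ?thesis unfolding K_def by (simp add: ac_simps)
      qed
    qed
  qed
  then show "(\<integral>\<^sup>+ x \<in> E. (\<integral>\<^sup>+ x' \<in> cball x r. ennreal (diffquot f x x' powr p) * \<rho> (x, x') \<partial>M) \<partial>M)
           \<le> ennreal C * IU M E r \<rho> * (SUP r'\<in>{0<..r}. \<integral>\<^sup>+ x \<in> E0. G x r' \<partial>M)"
    unfolding L_def S_def .
qed


end
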